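(* (a) There exist an absolute constant $C_0$ and, for every $n\ge1$, a deterministic exploration algorithm which, knowing only $n$ (and neither $k$ nor any bound on the period), solves PVG-Exploration of every feasible PV graph with distinct site identifiers and $n$ sites (homogeneous or heterogeneous, arbitrary routes), performing at most $C_0\,k\,p^2$ moves, where $k$ is the number of carriers and $p$ the period. (b) There exist an absolute constant $C_0$ and, for every $n\ge1$, a deterministic exploration algorithm which, knowing only $n$ and that the system is homogeneous, solves PVG-Exploration of every feasible homogeneous PV graph with distinct site identifiers and $n$ sites, performing at most $C_0\,k\,p$ moves.
   Context: A PV (periodically varying) system consists of a finite set $S$ of $n$ sites and a set $C$ of $k\le n$ carriers. Each carrier $c$ has a distinct identifier and a route $\pi(c)=\langle x_0,\dots,x_{p(c)-1}\rangle$, a finite sequence of sites (repetitions allowed) of length $p(c)\ge 1$ called its period; $\pi(c)[j]=x_{j \bmod p(c)}$. At each time $t\in\mathbb{N}$ carrier $c$ is at site $\pi(c)[t]$ and moves to $\pi(c)[t+1]$. The PV graph $\vec G_R$ is the directed edge-labelled multigraph on $S$ with edges $(x_i,x_{i+1},i)$, $0\le i<p(c)$, for every carrier. Its period is $p=\max_{c}p(c)$; it is homogeneous if all periods are equal, heterogeneous otherwise. In a system with ids the sites have distinct identifiers. An exploring agent is injected at time $0$ at a site of $\mathrm{start}(\vec G_R)=\{\pi(c)[0]:c\in C\}$. If at time $t$ the agent is at site $x$, it must either choose a carrier $c$ with $\pi(c)[t]=x$ and ride with it to $\pi(c)[t+1]$ (one move), or halt and exit; it cannot wait at a site. At each time the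 agent observes the identifiers of the carriers present at its current site and the identifier of that site. An exploration algorithm is a deterministic rule mapping the agent's a priori knowledge and history of observations to its next action. An algorithm solves PVG-Exploration of $\vec G_R$ if from every injection site the agent visits every site of $S$ and halts after finitely many moves. $\vec G_R$ is feasible if from the starting point of every carrier there exists a walk realizable by the agent (riding carriers and switching between carriers at the same site at the same time) visiting all sites. *)

theory Defs
  imports Main
begin

record pvsys =
  sites :: "nat set"
  carriers :: "nat set"
  route :: "nat \<Rightarrow> nat list"

definition pv_wf :: "pvsys \<Rightarrow> bool" where
  "pv_wf R \<longleftrightarrow> finite (sites R) \<and> finite (carriers R) \<and> carriers R \<noteq> {}
     \<and> card (carriers R) \<le> card (sites R)
     \<and> (\<forall>c\<in>carriers R. route R c \<noteq> [] \<and> set (route R c) \<subseteq> sites R)"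

definition at :: "pvsys \<Rightarrow> nat \<Rightarrow> nat \<Rightarrow> nat" where
  "at R c t = route R c ! (t mod length (route R c))"

definition period :: "pvsys \<Rightarrow> nat" where
  "period R = Max ((\<lambda>c. length (route R c)) ` carriers R)"

definition homogeneous :: "pvsys \<Rightarrow> bool" where
  "homogeneous R \<longleftrightarrow> (\<forall>c\<in>carriers R. \<forall>d\<in>carriers R. length (route R c) = length (route R d))"

definition start :: "pvsys \<Rightarrow> nat set" where
  "start R = (\<lambda>c. at R c 0) ` carriers R"

definition feasible :: "pvsys \<Rightarrow> bool" where
  "feasible R \<longleftrightarrow> (\<forall>x0\<in>start R. \<exists>m y. y 0 = x0
     \<and> (\<forall>i<m. \<exists>c\<in>carriers R. at R c i = y i \<and> at R c (Suc i) = y (Suc i))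
     \<and> sites R \<subseteq> y ` {..m})"

text \<open>Agent actions and observations. At time t the agent observes the identifier of its
  current site and the identifiers of the carriers present there.\<close>
datatype action = Halt | Ride nat

type_synonym obs = "nat \<times> nat set"
type_synonym algorithm = "obs list \<Rightarrow> action"

definition observe :: "pvsys \<Rightarrow> nat \<Rightarrow> nat \<Rightarrow> obs" where
  "observe R x t = (x, {c \<in> carriers R. at R c t = x})"

text \<open>History of observations up to and including time t (length t+1) of the agent
  running algorithm A, injected at x0.\<close>
fun hist :: "pvsys \<Rightarrow> algorithm \<Rightarrow> nat \<Rightarrow> nat \<Rightarrow> obs list" where
  "hist R A x0 0 = [observe R x0 0]"
| "hist R A x0 (Suc t) =
     (let h = hist R A x0 t;
          x = (case A h of Ride c \<Rightarrow> at R c (Suc t) | Halt \<Rightarrow> fst (last h))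
      in h @ [observe R x (Suc t)])"

definition agent_pos :: "pvsys \<Rightarrow> algorithm \<Rightarrow> nat \<Rightarrow> nat \<Rightarrow> nat" where
  "agent_pos R A x0 t = fst (last (hist R A x0 t))"

definition explores_within :: "pvsys \<Rightarrow> algorithm \<Rightarrow> nat \<Rightarrow> bool" where
  "explores_within R A B \<longleftrightarrow> (\<forall>x0\<in>start R. \<exists>m\<le>B.
     (\<forall>t<m. \<exists>c\<in>carriers R. A (hist R A x0 t) = Ride c \<and> at R c t = agent_pos R A x0 t)
     \<and> A (hist R A x0 m) = Halt
     \<and> sites R \<subseteq> agent_pos R A x0 ` {..m})"

end

theory Submission
  imports Defs
begin


datatype mode = Init | Scan nat nat | Dec nat | Seek nat nat nat | Ret nat nat nat

record st =
  md :: mode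
  rd :: nat
  TT :: nat
  VV :: "nat set"
  SS :: "nat list"
  NN :: "nat \<Rightarrow> nat set"

definition init :: st where
  "init = \<lparr>md = Init, rd = 0, TT = 1, VV = {}, SS = [], NN = (\<lambda>_. {})\<rparr>"

definition newphase :: "nat \<Rightarrow> nat \<Rightarrow> st" where
  "newphase T d = \<lparr>md = Scan d 0, rd = d, TT = T, VV = {d}, SS = [], NN = (\<lambda>_. {})\<rparr>"

definition stepf :: "st \<Rightarrow> obs \<Rightarrow> st" where
  "stepf s ob = (let Cs = snd ob; T = TT s in case md s of
     Init \<Rightarrow> newphase 1 (Min Cs)
   | Scan d i \<Rightarrow> s\<lparr>md := (if Suc i < T then Scan d (Suc i) else Dec d), rd := d,
                    NN := (NN s)(d := NN s d \<union> Cs)\<rparr>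
   | Dec d \<Rightarrow> (if \<exists>e. e \<in> NN s d \<and> e \<notin> VV s
               then s\<lparr>md := Seek d (SOME e. e \<in> NN s d \<and> e \<notin> VV s) 0, rd := d\<rparr>
               else (case SS s of p # _ \<Rightarrow> s\<lparr>md := Ret d p 0, rd := d\<rparr>
                                 | [] \<Rightarrow> newphase (2*T) d))
   | Seek d e i \<Rightarrow> (if e \<in> Cs then s\<lparr>md := Scan e 0, rd := e, VV := insert e (VV s), SS := d # SS s\<rparr>
                    else if Suc i < T then s\<lparr>md := Seek d e (Suc i), rd := d\<rparr>
                    else newphase (2*T) d)
   | Ret d p i \<Rightarrow> (if p \<in> Cs then s\<lparr>md := Dec p, rd := p, SS := tl (SS s)\<rparr>
                    else if Suc i < T then s\<lparr>md := Ret d p (Suc i), rd := d\<rparr>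
                    else newphase (2*T) d))"

definition alg :: "nat \<Rightarrow> algorithm" where
  "alg n h = (if n \<le> card (fst ` set h) then Halt else Ride (rd (foldl stepf init h)))"

fun frun :: "pvsys \<Rightarrow> nat \<Rightarrow> nat \<Rightarrow> nat \<times> st" where
  "frun R x0 0 = (x0, stepf init (observe R x0 0))"
| "frun R x0 (Suc t) = (let s = snd (frun R x0 t); x = at R (rd s) (Suc t)
                        in (x, stepf s (observe R x (Suc t))))"

definition fpos where "fpos R x0 t = fst (frun R x0 t)"

lemma foldl_frun:
  "foldl stepf init (map (\<lambda>u. observe R (fpos R x0 u) u) [0..<Suc t]) = snd (frun R x0 t)"
proof (induction t)
  case 0
  then show ?case by (simp add: fpos_def)
next
  case (Suc t)
  have "[0..<Suc (Suc t)] = [0..<Suc t] @ [Suc t]" by simp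
  then show ?case using Suc by (simp add: fpos_def Let_def del: upt_Suc)
qed

lemma hist_frun:
  "(\<forall>s<t. card (fpos R x0 ` {..s}) < n) \<Longrightarrow>
   hist R (alg n) x0 t = map (\<lambda>u. observe R (fpos R x0 u) u) [0..<Suc t]"
proof (induction t)
  case 0
  then show ?case by (simp add: fpos_def)
next
  case (Suc t)
  let ?h = "map (\<lambda>u. observe R (fpos R x0 u) u) [0..<Suc t]"
  have IH: "hist R (alg n) x0 t = ?h" using Suc by simp
  have fs: "fst ` set ?h = fpos R x0 ` {..t}"
  proof -
    have "set [0..<Suc t] = {..t}" by auto
    then have "fst ` set ?h = (\<lambda>u. fst (observe R (fpos R x0 u) u)) ` {..t}"
      by (simp only: list.set_map image_image)
    then show ?thesis by (simp add: observe_def)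
  qed
  have "card (fpos R x0 ` {..t}) < n" using Suc.prems by simp
  hence A: "alg n ?h = Ride (rd (snd (frun R x0 t)))"
    using fs foldl_frun[of R x0 t] by (simp add: alg_def)
  have "[0..<Suc (Suc t)] = [0..<Suc t] @ [Suc t]" by simp
  then show ?case using IH A
    by (simp add: Let_def fpos_def del: upt_Suc)
qed



lemma window:
  assumes "0 < L" "L \<le> T" "T \<le> Suc u" "r < L"
  shows "\<exists>j<T. (u - j) mod L = r"
proof -
  define j where "j = (u + L - r) mod L"
  have jL: "j < L" using assms by (simp add: j_def)
  have ju: "j \<le> u" using jL assms by linarith
  have ij: "int j = (int u + int L - int r) mod int L" using assms by (simp add: j_def zmod_int of_nat_diff)
  have "int ((u - j) mod L) = (int u - (int u + int L - int r) mod int L) mod int L"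
    using ju ij by (simp add: zmod_int of_nat_diff)
  also have "\<dots> = (int u - (int u + int L - int r)) mod int L" by (simp add: mod_diff_right_eq)
  also have "\<dots> = int r" using assms by (simp add: mod_pos_pos_trivial)
  finally have "(u - j) mod L = r" by simp
  then show ?thesis using jL assms by (intro exI[of _ j]) auto
qed

lemma per_aux: "\<forall>t. f (t + (L::nat)) = f t \<Longrightarrow> f (r + L*(q::nat)) = f r"
proof (induction q)
  case (Suc q)
  have "f (r + L * Suc q) = f ((r + L*q) + L)" by (simp add: algebra_simps)
  then show ?case using Suc by simp
qed simp

lemma per_mod:
  assumes "\<forall>t. f (t + L) = f t"
  shows "f t = f (t mod (L::nat))"
proof -
  have "\<And>q r. f (r + L*q) = f r" using per_aux[OF assms] by blast
  then show ?thesis by (metis mod_div_mult_eq mult.commute)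
qed

definition meet :: "pvsys \<Rightarrow> nat \<Rightarrow> nat \<Rightarrow> bool" where
  "meet R c e \<longleftrightarrow> (\<exists>t. at R c t = at R e t)"

definition meetC :: "pvsys \<Rightarrow> nat \<Rightarrow> nat \<Rightarrow> bool" where
  "meetC R c e \<longleftrightarrow> c \<in> carriers R \<and> e \<in> carriers R \<and> meet R c e"

fun chain :: "pvsys \<Rightarrow> nat list \<Rightarrow> bool" where
  "chain R (a # b # r) = (meet R a b \<and> chain R (b # r))"
| "chain R _ = True"

definition perH :: "pvsys \<Rightarrow> nat \<Rightarrow> bool" where
  "perH R Lm \<longleftrightarrow> (\<forall>c\<in>carriers R. \<forall>d\<in>carriers R. \<exists>L. 0 < L \<and> L \<le> Lm \<and>
      (\<forall>t. at R c (t+L) = at R c t \<and> at R d (t+L) = at R d t))"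

fun mcar :: "mode \<Rightarrow> nat" where
  "mcar Init = 0" | "mcar (Scan d i) = d" | "mcar (Dec d) = d" | "mcar (Seek d e i) = d"
| "mcar (Ret d p i) = d"

definition mpot :: "nat \<Rightarrow> mode \<Rightarrow> int" where
  "mpot T m = (case m of Scan d i \<Rightarrow> int T - int i + 2 | Dec d \<Rightarrow> 2 | Seek d e i \<Rightarrow> 1 - int i
     | Ret d p i \<Rightarrow> 1 - int i | Init \<Rightarrow> 0)"

definition Phi :: "nat \<Rightarrow> st \<Rightarrow> int" where
  "Phi K s = (3 * int (TT s) + 2) * (int K - int (card (VV s))) + (int (TT s) + 1) * int (length (SS s))
     + mpot (TT s) (md s)"

lemma meet_sym: "meet R c e = meet R e c"
  unfolding meet_def by metis

lemma at_in_route: "c \<in> carriers R \<Longrightarrow> pv_wf R \<Longrightarrow> at R c t \<in> set (route R c)"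
  unfolding at_def pv_wf_def by auto

locale exrun =
  fixes R :: pvsys and x0 :: nat and Lm :: nat
  assumes wf: "pv_wf R" and x0: "x0 \<in> start R" and feas: "feasible R" and per: "perH R Lm"
begin

definition pos where "pos t = fpos R x0 t"
definition sg where "sg t = snd (frun R x0 t)"
definition Cs where "Cs t = {c \<in> carriers R. at R c t = pos t}"
definition cs where "cs = Min (Cs 0)"
definition K where "K = card (carriers R)"

lemma finC: "finite (carriers R)" using wf by (simp add: pv_wf_def)

lemma pos_Suc: "pos (Suc t) = at R (rd (sg t)) (Suc t)"
  by (simp add: pos_def sg_def fpos_def Let_def)

lemma sg_Suc: "sg (Suc t) = stepf (sg t) (pos (Suc t), Cs (Suc t))"
  by (simp add: pos_def sg_def fpos_def Let_def Cs_def observe_def)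

lemma pos0: "pos 0 = x0" by (simp add: pos_def fpos_def)

lemma sg0: "sg 0 = newphase 1 cs"
  by (simp add: sg_def stepf_def init_def observe_def cs_def Cs_def pos0)

lemma cs_in: "cs \<in> Cs 0"
proof -
  have "Cs 0 \<noteq> {}" using x0 by (auto simp: start_def Cs_def pos0)
  moreover have "finite (Cs 0)" using finC by (simp add: Cs_def)
  ultimately show ?thesis by (simp add: cs_def)
qed

definition fullN where
  "fullN N t v \<longleftrightarrow> (\<forall>e\<in>carriers R. meet R v e \<longrightarrow> e \<in> N v) \<and> set (route R v) \<subseteq> pos ` {..t}"

definition minv :: "nat \<Rightarrow> nat \<Rightarrow> nat set \<Rightarrow> nat list \<Rightarrow> (nat \<Rightarrow> nat set) \<Rightarrow> mode \<Rightarrow> bool" where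
  "minv t T V S N m = (case m of
     Init \<Rightarrow> False
   | Scan d i \<Rightarrow> i < T \<and> i \<le> t \<and> (\<forall>j<i. pos (t-j) = at R d (t-j) \<and> Cs (t-j) \<subseteq> N d)
   | Dec d \<Rightarrow> True
   | Seek d e i \<Rightarrow> i < T \<and> i \<le> t \<and> e \<in> N d \<and> e \<notin> V \<and> (\<forall>j<i. at R e (t-j) \<noteq> at R d (t-j))
   | Ret d p i \<Rightarrow> i < T \<and> i \<le> t \<and> S \<noteq> [] \<and> hd S = p \<and> N d \<subseteq> V
        \<and> (\<forall>j<i. at R p (t-j) \<noteq> at R d (t-j)))"

definition InvS :: "nat \<Rightarrow> st \<Rightarrow> bool" where
  "InvS t s \<longleftrightarrow> (let d = mcar (md s) in
     rd s = d \<and> d \<in> carriers R \<and> at R d t = pos t \<and>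
     finite (VV s) \<and> VV s \<subseteq> carriers R \<and> d \<in> VV s \<and> set (SS s) \<subseteq> VV s \<and>
     (\<exists>a. TT s = 2^a) \<and>
     (\<forall>v e. e \<in> NN s v \<longrightarrow> e \<in> carriers R \<and> meet R v e) \<and>
     chain R (d # SS s) \<and>
     (\<forall>v\<in>VV s - set (d # SS s). NN s v \<subseteq> VV s) \<and>
     (Lm \<le> TT s \<longrightarrow> (\<forall>v\<in>VV s. (\<exists>i. md s = Scan v i) \<or> fullN (NN s) t v)) \<and>
     (meetC R)\<^sup>*\<^sup>* cs d \<and>
     minv t (TT s) (VV s) (SS s) (NN s) (md s))"

definition Inv where "Inv t = InvS t (sg t)"

lemma per_pair:
  assumes "c \<in> carriers R" "e \<in> carriers R"
  obtains L where "0 < L" "L \<le> Lm" "\<And>t. at R c t = at R c (t mod L)" "\<And>t. at R e t = at R e (t mod L)"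
proof -
  obtain L where L: "0 < L" "L \<le> Lm" "\<forall>t. at R c (t+L) = at R c t \<and> at R e (t+L) = at R e t"
    using per assms unfolding perH_def by blast
  have P1: "\<forall>t. at R c (t+L) = at R c t" and P2: "\<forall>t. at R e (t+L) = at R e t" using L(3) by auto
  have "at R c t = at R c (t mod L)" for t by (rule per_mod[OF P1])
  moreover have "at R e t = at R e (t mod L)" for t by (rule per_mod[OF P2])
  ultimately show ?thesis using that L(1,2) by blast
qed

lemma per_single:
  assumes "c \<in> carriers R"
  obtains L where "0 < L" "L \<le> Lm" "\<And>t. at R c t = at R c (t mod L)"
proof -
  obtain L where L: "0 < L" "L \<le> Lm" "\<forall>t. at R c (t+L) = at R c t \<and> at R c (t+L) = at R c t"
    using per assms unfolding perH_def by blast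
  have P: "\<forall>t. at R c (t+L) = at R c t" using L(3) by auto
  have "at R c t = at R c (t mod L)" for t by (rule per_mod[OF P])
  then show ?thesis using that L(1,2) by blast
qed

lemma meet_window:
  assumes "c \<in> carriers R" "e \<in> carriers R" "meet R c e" "Lm \<le> T" "T \<le> Suc u"
  shows "\<exists>j<T. at R c (u-j) = at R e (u-j)"
proof -
  obtain t0 where t0: "at R c t0 = at R e t0" using assms(3) by (auto simp: meet_def)
  obtain L where L: "0 < L" "L \<le> Lm" "\<And>t. at R c t = at R c (t mod L)" "\<And>t. at R e t = at R e (t mod L)"
    using per_pair[OF assms(1,2)] by blast
  obtain j where j: "j < T" "(u - j) mod L = t0 mod L"
    using window[of L T u "t0 mod L"] L(1,2) assms(4,5) by auto
  have "at R c (u-j) = at R c ((u-j) mod L)" by (rule L(3))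
  also have "\<dots> = at R c (t0 mod L)" using j(2) by (simp only:)
  also have "\<dots> = at R c t0" by (rule L(3)[symmetric])
  finally have 1: "at R c (u-j) = at R c t0" .
  have "at R e (u-j) = at R e ((u-j) mod L)" by (rule L(4))
  also have "\<dots> = at R e (t0 mod L)" using j(2) by (simp only:)
  also have "\<dots> = at R e t0" by (rule L(4)[symmetric])
  finally have 2: "at R e (u-j) = at R e t0" .
  from 1 2 have "at R c (u-j) = at R e (u-j)" using t0 by simp
  then show ?thesis using j by blast
qed

lemma route_window:
  assumes "c \<in> carriers R" "Lm \<le> T" "T \<le> Suc u" "x \<in> set (route R c)"
  shows "\<exists>j<T. at R c (u-j) = x"
proof -
  obtain i where i: "i < length (route R c)" "route R c ! i = x" using assms(4) by (auto simp: in_set_conv_nth)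
  have xi: "at R c i = x" using i by (simp add: at_def)
  obtain L where L: "0 < L" "L \<le> Lm" "\<And>t. at R c t = at R c (t mod L)"
    using per_single[OF assms(1)] by blast
  obtain j where j: "j < T" "(u - j) mod L = i mod L"
    using window[of L T u "i mod L"] L(1,2) assms(2,3) by auto
  have "at R c (u-j) = at R c ((u-j) mod L)" by (rule L(3))
  also have "\<dots> = at R c (i mod L)" using j(2) by (simp only:)
  also have "\<dots> = at R c i" by (rule L(3)[symmetric])
  finally have "at R c (u-j) = at R c i" .
  hence "at R c (u-j) = x" using xi by (simp only:)
  then show ?thesis using j by blast
qed

lemma scan_full:
  assumes "d \<in> carriers R" "Lm \<le> T" "T \<le> Suc u"
    "\<forall>j<T. pos (u-j) = at R d (u-j) \<and> Cs (u-j) \<subseteq> N d"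
  shows "fullN N u d"
  unfolding fullN_def
proof (intro conjI ballI impI subsetI)
  fix e assume e: "e \<in> carriers R" "meet R d e"
  obtain j where "j<T" "at R d (u-j) = at R e (u-j)" using meet_window[OF assms(1) e(1) e(2) assms(2,3)] by blast
  then have "pos (u-j) = at R d (u-j)" "Cs (u-j) \<subseteq> N d" using assms(4) by auto
  moreover have "e \<in> Cs (u-j)" using e(1) `at R d (u-j) = at R e (u-j)` calculation(1) by (simp add: Cs_def)
  ultimately show "e \<in> N d" by blast
next
  fix x assume "x \<in> set (route R d)"
  then obtain j where "j<T" "at R d (u-j) = x" using route_window[OF assms(1,2,3)] by blast
  then show "x \<in> pos ` {..u}" using assms(4) by (metis atMost_iff diff_le_self image_eqI)
qed

lemma Inv0: "Inv 0"
  using cs_in by (auto simp: Inv_def InvS_def sg0 newphase_def minv_def Cs_def pos0 intro: exI[of _ 0])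

end


lemma shiftw: "(\<forall>j<i. P (t - j)) \<Longrightarrow> P (Suc t) \<Longrightarrow> \<forall>j<Suc i. P (Suc t - j)"
  by (auto simp: less_Suc_eq_0_disj)

context exrun
begin

lemma InvSD:
  assumes "InvS t s"
  shows "rd s = mcar (md s)" "mcar (md s) \<in> carriers R" "at R (mcar (md s)) t = pos t"
    "finite (VV s)" "VV s \<subseteq> carriers R" "mcar (md s) \<in> VV s" "set (SS s) \<subseteq> VV s"
    "\<exists>a. TT s = 2^a" "\<forall>v e. e \<in> NN s v \<longrightarrow> e \<in> carriers R \<and> meet R v e"
    "chain R (mcar (md s) # SS s)" "\<forall>v\<in>VV s - set (mcar (md s) # SS s). NN s v \<subseteq> VV s"
    "Lm \<le> TT s \<longrightarrow> (\<forall>v\<in>VV s. (\<exists>i. md s = Scan v i) \<or> fullN (NN s) t v)"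
    "(meetC R)\<^sup>*\<^sup>* cs (mcar (md s))" "minv t (TT s) (VV s) (SS s) (NN s) (md s)"
  using assms unfolding InvS_def Let_def by auto

lemma InvSI:
  assumes "rd s = d" "mcar (md s) = d" "d \<in> carriers R" "at R d t = pos t"
    "finite (VV s)" "VV s \<subseteq> carriers R" "d \<in> VV s" "set (SS s) \<subseteq> VV s"
    "\<exists>a. TT s = 2^a" "\<forall>v e. e \<in> NN s v \<longrightarrow> e \<in> carriers R \<and> meet R v e"
    "chain R (d # SS s)" "\<forall>v\<in>VV s - set (d # SS s). NN s v \<subseteq> VV s"
    "Lm \<le> TT s \<longrightarrow> (\<forall>v\<in>VV s. (\<exists>i. md s = Scan v i) \<or> fullN (NN s) t v)"
    "(meetC R)\<^sup>*\<^sup>* cs d" "minv t (TT s) (VV s) (SS s) (NN s) (md s)"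
  shows "InvS t s"
  using assms unfolding InvS_def Let_def by simp

lemma fullN_mono: "fullN N t v \<Longrightarrow> N v \<subseteq> N' v \<Longrightarrow> t \<le> t' \<Longrightarrow> fullN N' t' v"
  unfolding fullN_def by auto

lemma Cs_Suc: "rd (sg t) = d \<Longrightarrow> Cs (Suc t) = {c \<in> carriers R. at R c (Suc t) = at R d (Suc t)}"
  by (simp add: Cs_def pos_Suc)

lemma step_Scan:
  assumes I: "InvS t (sg t)" and m: "md (sg t) = Scan d i"
  shows "InvS (Suc t) (sg (Suc t)) \<and> TT (sg (Suc t)) = TT (sg t) \<and> Phi K (sg (Suc t)) < Phi K (sg t)"
proof -
  let ?s = "sg t"
  let ?T = "TT ?s" and ?V = "VV ?s" and ?S = "SS ?s" and ?N = "NN ?s"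
  note D = InvSD[OF I, unfolded m mcar.simps]
  have rd: "rd ?s = d" using D(1) .
  have mi: "i < ?T" "i \<le> t" "\<forall>j<i. pos (t-j) = at R d (t-j) \<and> Cs (t-j) \<subseteq> ?N d"
    using D(14) by (simp_all add: minv_def m)
  have px: "pos (Suc t) = at R d (Suc t)" using pos_Suc rd by simp
  have CS: "Cs (Suc t) = {c \<in> carriers R. at R c (Suc t) = at R d (Suc t)}" using Cs_Suc[OF rd] .
  define N' where "N' = ?N(d := ?N d \<union> Cs (Suc t))"
  have s': "sg (Suc t) = ?s\<lparr>md := (if Suc i < ?T then Scan d (Suc i) else Dec d), rd := d, NN := N'\<rparr>"
    by (simp add: sg_Suc stepf_def m N'_def)
  have win: "\<forall>j<Suc i. pos (Suc t - j) = at R d (Suc t - j) \<and> Cs (Suc t - j) \<subseteq> N' d"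
  proof -
    have "\<forall>j<i. pos (t-j) = at R d (t-j) \<and> Cs (t-j) \<subseteq> N' d" using mi(3) by (auto simp: N'_def)
    moreover have "pos (Suc t) = at R d (Suc t) \<and> Cs (Suc t) \<subseteq> N' d" using px by (auto simp: N'_def)
    ultimately show ?thesis by (rule shiftw)
  qed
  have Nm': "\<forall>v e. e \<in> N' v \<longrightarrow> e \<in> carriers R \<and> meet R v e"
    using D(9) by (auto simp: N'_def CS meet_def) (metis)
  have cl': "\<forall>v\<in>?V - set (d # ?S). N' v \<subseteq> ?V" using D(11) by (auto simp: N'_def)
  have fu': "Lm \<le> ?T \<longrightarrow> (\<forall>v\<in>?V. (\<exists>i'. md (sg (Suc t)) = Scan v i') \<or> fullN N' (Suc t) v)"
  proof (intro impI ballI)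
    fix v assume L: "Lm \<le> ?T" and v: "v \<in> ?V"
    show "(\<exists>i'. md (sg (Suc t)) = Scan v i') \<or> fullN N' (Suc t) v"
    proof (cases "v = d")
      case True
      show ?thesis
      proof (cases "Suc i < ?T")
        case True then show ?thesis using \<open>v = d\<close> by (simp add: s')
      next
        case False
        hence "?T = Suc i" using mi(1) by simp
        hence T1: "?T \<le> Suc (Suc t)" using mi(2) by simp
        have W: "\<forall>j<?T. pos (Suc t - j) = at R d (Suc t - j) \<and> Cs (Suc t - j) \<subseteq> N' d"
          using win \<open>?T = Suc i\<close> by (simp only:)
        have "fullN N' (Suc t) d" using scan_full[of d "?T" "Suc t" N'] D(2) L T1 W by blast
        then show ?thesis using True by (simp only:) simp
      qed
    next
      case False
      hence "fullN ?N t v" using D(12) L v by (auto simp: m)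
      moreover have "?N v \<subseteq> N' v" using False by (simp add: N'_def)
      ultimately have "fullN N' (Suc t) v" by (rule fullN_mono) simp
      then show ?thesis by (rule disjI2)
    qed
  qed
  have mi': "minv (Suc t) ?T ?V ?S N' (md (sg (Suc t)))"
  proof (cases "Suc i < ?T")
    case True
    then show ?thesis using win mi(2) unfolding minv_def s' by simp
  next
    case False
    then show ?thesis unfolding minv_def s' by simp
  qed
  have f': "rd (sg (Suc t)) = d" "mcar (md (sg (Suc t))) = d" "TT (sg (Suc t)) = ?T"
     "VV (sg (Suc t)) = ?V" "SS (sg (Suc t)) = ?S" "NN (sg (Suc t)) = N'"
    by (simp_all add: s')
  have inv: "InvS (Suc t) (sg (Suc t))"
    apply (rule InvSI)
    using D Nm' cl' fu' mi' px f' by (simp_all only:)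
  have "mpot ?T (md (sg (Suc t))) < mpot ?T (md ?s)"
    using mi(1) unfolding s' mpot_def m by auto
  hence "Phi K (sg (Suc t)) < Phi K ?s"
    unfolding Phi_def by (simp add: s')
  then show ?thesis using inv by (simp add: s')
qed

definition phase_end where
  "phase_end t \<longleftrightarrow> sg (Suc t) = newphase (2 * TT (sg t)) (mcar (md (sg t)))
     \<and> (Lm \<le> TT (sg t) \<longrightarrow> sites R \<subseteq> pos ` {..t})"

lemma newphase_inv:
  assumes "d \<in> carriers R" "at R d u = pos u" "\<exists>a. T = 2^a" "(meetC R)\<^sup>*\<^sup>* cs d"
  shows "InvS u (newphase (2*T) d)"
proof -
  obtain a where "T = 2^a" using assms(3) by blast
  hence "2*T = 2^(Suc a)" by simp
  hence P: "\<exists>a. 2*T = 2^a" by blast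
  have "0 < 2*T" using \<open>T = 2^a\<close> by simp
  then show ?thesis using assms P
    by (intro InvSI[where d=d]) (simp_all add: newphase_def minv_def)
qed

lemma full_all_mono:
  assumes "Lm \<le> T \<longrightarrow> (\<forall>v\<in>V. (\<exists>i. m = Scan v i) \<or> fullN N t v)" "\<forall>v i. m \<noteq> Scan v i"
  shows "Lm \<le> T \<longrightarrow> (\<forall>v\<in>V. (\<exists>i. m' = Scan v i) \<or> fullN N (Suc t) v)"
  using assms fullN_mono[of N t _ N "Suc t"] by auto

lemma completion:
  assumes I: "InvS t s" and m: "md s = Dec d" and ne: "\<not>(\<exists>e. e \<in> NN s d \<and> e \<notin> VV s)"
    and S: "SS s = []" and L: "Lm \<le> TT s"
  shows "sites R \<subseteq> pos ` {..t}"
proof -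
  note D = InvSD[OF I, unfolded m mcar.simps]
  let ?V = "VV s" and ?N = "NN s"
  have full: "\<forall>v\<in>?V. fullN ?N t v" using D(12) L m by auto
  have clo: "\<forall>v\<in>?V. \<forall>e\<in>carriers R. meet R v e \<longrightarrow> e \<in> ?V"
  proof (intro ballI impI)
    fix v e assume v: "v \<in> ?V" and e: "e \<in> carriers R" "meet R v e"
    have "e \<in> ?N v" using full v e unfolding fullN_def by blast
    moreover have "?N v \<subseteq> ?V"
    proof (cases "v = d")
      case True then show ?thesis using ne by auto
    next
      case False then show ?thesis using D(11) S v by auto
    qed
    ultimately show "e \<in> ?V" by blast
  qed
  have symm: "(meetC R)\<^sup>*\<^sup>* d cs"
  proof -
    have "((meetC R)\<inverse>\<inverse>)\<^sup>*\<^sup>* d cs" using D(13) by (simp add: rtranclp_conversep)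
    moreover have "(meetC R)\<inverse>\<inverse> = meetC R" by (auto simp: meetC_def meet_sym fun_eq_iff)
    ultimately show ?thesis by simp
  qed
  have reach: "\<And>a b. (meetC R)\<^sup>*\<^sup>* a b \<Longrightarrow> a \<in> ?V \<Longrightarrow> b \<in> ?V"
  proof -
    fix a b assume "(meetC R)\<^sup>*\<^sup>* a b" "a \<in> ?V"
    then show "b \<in> ?V"
      by (induction rule: rtranclp_induct) (use clo in \<open>auto simp: meetC_def\<close>)
  qed
  have csV: "cs \<in> ?V" using reach[OF symm] D(6) by blast
  obtain mm y where y0: "y 0 = x0"
    and yw: "\<forall>i<mm. \<exists>c\<in>carriers R. at R c i = y i \<and> at R c (Suc i) = y (Suc i)"
    and ys: "sites R \<subseteq> y ` {..mm}"
    using feas x0 unfolding feasible_def by blast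
  define cc where "cc i = (SOME c. c \<in> carriers R \<and> at R c i = y i \<and> at R c (Suc i) = y (Suc i))" for i
  have cc: "cc i \<in> carriers R \<and> at R (cc i) i = y i \<and> at R (cc i) (Suc i) = y (Suc i)" if "i < mm" for i
  proof -
    have "\<exists>c. c \<in> carriers R \<and> at R c i = y i \<and> at R c (Suc i) = y (Suc i)" using yw that by blast
    then show ?thesis unfolding cc_def by (rule someI_ex)
  qed
  have ccV: "i < mm \<Longrightarrow> cc i \<in> ?V" for i
  proof (induction i)
    case 0
    have "at R cs 0 = x0" using cs_in by (simp add: Cs_def pos0)
    hence "meet R cs (cc 0)" using cc[OF 0] y0 unfolding meet_def by metis
    then show ?case using clo csV cc[OF 0] by blast
  next
    case (Suc i)
    hence "cc i \<in> ?V" by simp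
    moreover have "meet R (cc i) (cc (Suc i))" using cc[of i] cc[OF Suc.prems] Suc.prems
      unfolding meet_def by (metis Suc_lessD)
    ultimately show ?case using clo cc[OF Suc.prems] by blast
  qed
  have routes: "i < mm \<Longrightarrow> set (route R (cc i)) \<subseteq> pos ` {..t}" for i
    using full ccV[of i] unfolding fullN_def by blast
  show ?thesis
  proof
    fix x assume "x \<in> sites R"
    then obtain j where j: "j \<le> mm" "x = y j" using ys by blast
    show "x \<in> pos ` {..t}"
    proof (cases "j < mm")
      case True
      hence "x = at R (cc j) j" using cc j by simp
      then show ?thesis using routes[OF True] at_in_route[OF _ wf] cc[OF True] by blast
    next
      case False
      show ?thesis
      proof (cases mm)
        case 0
        hence "x = pos 0" using j y0 pos0 by simp
        then show ?thesis by blast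
      next
        case (Suc m1)
        hence "j = Suc m1" "m1 < mm" using j False by auto
        hence "x = at R (cc m1) (Suc m1)" using cc[of m1] j by simp
        then show ?thesis using routes[OF \<open>m1 < mm\<close>] at_in_route[OF _ wf] cc[OF \<open>m1 < mm\<close>] by blast
      qed
    qed
  qed
qed

lemma step_Dec:
  assumes I: "InvS t (sg t)" and m: "md (sg t) = Dec d"
  shows "InvS (Suc t) (sg (Suc t)) \<and> ((TT (sg (Suc t)) = TT (sg t) \<and> Phi K (sg (Suc t)) < Phi K (sg t)) \<or> phase_end t)"
proof -
  let ?s = "sg t"
  let ?T = "TT ?s" and ?V = "VV ?s" and ?S = "SS ?s" and ?N = "NN ?s"
  note D = InvSD[OF I, unfolded m mcar.simps]
  have rd: "rd ?s = d" using D(1) .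
  have px: "pos (Suc t) = at R d (Suc t)" using pos_Suc rd by simp
  have Tpos: "0 < ?T" using D(8) by auto
  have fu': "\<And>m'. Lm \<le> ?T \<longrightarrow> (\<forall>v\<in>?V. (\<exists>i. m' = Scan v i) \<or> fullN ?N (Suc t) v)"
    by (rule full_all_mono[OF D(12)]) (simp add: m)
  show ?thesis
  proof (cases "\<exists>e. e \<in> ?N d \<and> e \<notin> ?V")
    case True
    define e where "e = (SOME e. e \<in> ?N d \<and> e \<notin> ?V)"
    have e: "e \<in> ?N d" "e \<notin> ?V" using someI_ex[OF True] unfolding e_def by auto
    have s': "sg (Suc t) = ?s\<lparr>md := Seek d e 0, rd := d\<rparr>"
      using True by (simp add: sg_Suc stepf_def m e_def)
    have f': "rd (sg (Suc t)) = d" "mcar (md (sg (Suc t))) = d" "TT (sg (Suc t)) = ?T"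
     "VV (sg (Suc t)) = ?V" "SS (sg (Suc t)) = ?S" "NN (sg (Suc t)) = ?N" "md (sg (Suc t)) = Seek d e 0"
      by (simp_all add: s')
    have mi': "minv (Suc t) ?T ?V ?S ?N (md (sg (Suc t)))"
      using e Tpos unfolding f' minv_def by simp
    have inv: "InvS (Suc t) (sg (Suc t))"
      apply (rule InvSI)
      using D fu' mi' px f' by (simp_all only:)
    have "Phi K (sg (Suc t)) < Phi K ?s" unfolding Phi_def f' by (simp add: m mpot_def)
    then show ?thesis using inv f' by simp
  next
    case False
    show ?thesis
    proof (cases ?S)
      case (Cons p S0)
      have s': "sg (Suc t) = ?s\<lparr>md := Ret d p 0, rd := d\<rparr>"
        using False Cons by (simp add: sg_Suc stepf_def m)
      have f': "rd (sg (Suc t)) = d" "mcar (md (sg (Suc t))) = d" "TT (sg (Suc t)) = ?T"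
       "VV (sg (Suc t)) = ?V" "SS (sg (Suc t)) = ?S" "NN (sg (Suc t)) = ?N" "md (sg (Suc t)) = Ret d p 0"
        by (simp_all add: s')
      have mi': "minv (Suc t) ?T ?V ?S ?N (md (sg (Suc t)))"
        using False Tpos Cons unfolding f' minv_def by auto
      have inv: "InvS (Suc t) (sg (Suc t))"
        apply (rule InvSI)
        using D fu' mi' px f' by (simp_all only:)
      have "Phi K (sg (Suc t)) < Phi K ?s" unfolding Phi_def f' by (simp add: m mpot_def)
      then show ?thesis using inv f' by simp
    next
      case Nil
      have s': "sg (Suc t) = newphase (2 * ?T) d"
        using False Nil by (auto simp: sg_Suc stepf_def m)
      have inv: "InvS (Suc t) (sg (Suc t))"
        unfolding s' using newphase_inv[OF D(2) px[symmetric] D(8) D(13)] .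
      have "phase_end t" unfolding phase_end_def
        using s' completion[OF I m False Nil] m by simp
      then show ?thesis using inv by simp
    qed
  qed
qed

lemma step_Seek:
  assumes I: "InvS t (sg t)" and m: "md (sg t) = Seek d e i"
  shows "InvS (Suc t) (sg (Suc t)) \<and> ((TT (sg (Suc t)) = TT (sg t) \<and> Phi K (sg (Suc t)) < Phi K (sg t)) \<or> phase_end t)"
proof -
  let ?s = "sg t"
  let ?T = "TT ?s" and ?V = "VV ?s" and ?S = "SS ?s" and ?N = "NN ?s"
  note D = InvSD[OF I, unfolded m mcar.simps]
  have rd: "rd ?s = d" using D(1) .
  have px: "pos (Suc t) = at R d (Suc t)" using pos_Suc rd by simp
  have CS: "Cs (Suc t) = {c \<in> carriers R. at R c (Suc t) = at R d (Suc t)}" using Cs_Suc[OF rd] .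
  have mi: "i < ?T" "i \<le> t" "e \<in> ?N d" "e \<notin> ?V" "\<forall>j<i. at R e (t-j) \<noteq> at R d (t-j)"
    using D(14) by (simp_all add: minv_def m)
  have eC: "e \<in> carriers R" and mde: "meet R d e" using D(9) mi(3) by auto
  have fu': "\<And>m'. Lm \<le> ?T \<longrightarrow> (\<forall>v\<in>?V. (\<exists>i. m' = Scan v i) \<or> fullN ?N (Suc t) v)"
    by (rule full_all_mono[OF D(12)]) (simp add: m)
  show ?thesis
  proof (cases "e \<in> Cs (Suc t)")
    case True
    have s': "sg (Suc t) = ?s\<lparr>md := Scan e 0, rd := e, VV := insert e ?V, SS := d # ?S\<rparr>"
      using True by (simp add: sg_Suc stepf_def m)
    have f': "rd (sg (Suc t)) = e" "mcar (md (sg (Suc t))) = e" "TT (sg (Suc t)) = ?T"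
     "VV (sg (Suc t)) = insert e ?V" "SS (sg (Suc t)) = d # ?S" "NN (sg (Suc t)) = ?N"
     "md (sg (Suc t)) = Scan e 0"
      by (simp_all add: s')
    have ep: "at R e (Suc t) = pos (Suc t)" using True px CS by simp
    have med: "meet R e d" using ep px unfolding meet_def by metis
    have ch: "chain R (e # d # ?S)" using med D(10) by simp
    have cl: "\<forall>v\<in>insert e ?V - set (e # d # ?S). ?N v \<subseteq> insert e ?V" using D(11) by auto
    have fu2: "Lm \<le> ?T \<longrightarrow> (\<forall>v\<in>insert e ?V. (\<exists>i. Scan e 0 = Scan v i) \<or> fullN ?N (Suc t) v)"
      using fu'[of "Scan e 0"] by auto
    have cn: "(meetC R)\<^sup>*\<^sup>* cs e" using D(13) D(2) eC mde
      by (meson meetC_def rtranclp.rtrancl_into_rtrancl)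
    have mi': "minv (Suc t) ?T (insert e ?V) (d # ?S) ?N (md (sg (Suc t)))"
      using mi(1) unfolding f' minv_def by simp
    have inv: "InvS (Suc t) (sg (Suc t))"
      apply (rule InvSI[where d=e])
      unfolding f'
                    apply (rule refl)
                   apply simp
                  apply (rule eC)
                 apply (rule ep)
      using D(4) apply (simp only: finite_insert)
      using D(5) eC apply blast
              apply (rule insertI1)
      using D(6) D(7) apply auto[1]
      using D(8) apply (simp only:)
      using D(9) apply (simp only:)
      using ch apply (simp only:)
      using cl apply (simp only:)
      using fu2 apply (simp only: f')
      using cn apply (simp only:)
      using mi' by (simp only: f')
    have cV: "card (insert e ?V) = card ?V + 1" using D(4) mi(4) by simp
    define a where "a = int (card ?V)"
    define l where "l = int (length ?S)"
    define TI where "TI = int ?T"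
    have "Phi K (sg (Suc t)) = (3*TI+2)*(int K - (a+1)) + (TI+1)*(l+1) + (TI + 2)"
      unfolding Phi_def f' cV a_def l_def TI_def mpot_def by (simp add: algebra_simps)
    also have "\<dots> = (3*TI+2)*(int K - a) + (TI+1)*l - TI + 1" by (simp add: algebra_simps)
    also have "\<dots> < (3*TI+2)*(int K - a) + (TI+1)*l + 1 - int i" using mi(1) TI_def by simp
    also have "\<dots> = Phi K ?s" unfolding Phi_def a_def l_def TI_def mpot_def m by simp
    finally show ?thesis using inv f' by simp
  next
    case False
    hence ne: "at R e (Suc t) \<noteq> at R d (Suc t)" using CS eC by auto
    have win: "\<forall>j<Suc i. at R e (Suc t - j) \<noteq> at R d (Suc t - j)"
      by (rule shiftw[of i "\<lambda>u. at R e u \<noteq> at R d u", OF mi(5) ne])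
    show ?thesis
    proof (cases "Suc i < ?T")
      case True
      have s': "sg (Suc t) = ?s\<lparr>md := Seek d e (Suc i), rd := d\<rparr>"
        using True False by (simp add: sg_Suc stepf_def m)
      have f': "rd (sg (Suc t)) = d" "mcar (md (sg (Suc t))) = d" "TT (sg (Suc t)) = ?T"
       "VV (sg (Suc t)) = ?V" "SS (sg (Suc t)) = ?S" "NN (sg (Suc t)) = ?N"
       "md (sg (Suc t)) = Seek d e (Suc i)"
        by (simp_all add: s')
      have mi': "minv (Suc t) ?T ?V ?S ?N (md (sg (Suc t)))"
        using mi True win unfolding f' minv_def by simp
      have inv: "InvS (Suc t) (sg (Suc t))"
        apply (rule InvSI)
        using D fu' mi' px f' by (simp_all only:)
      have "Phi K (sg (Suc t)) < Phi K ?s" unfolding Phi_def f' by (simp add: m mpot_def)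
      then show ?thesis using inv f' by simp
    next
      case False2: False
      have s': "sg (Suc t) = newphase (2 * ?T) d"
        using False False2 by (simp add: sg_Suc stepf_def m)
      have inv: "InvS (Suc t) (sg (Suc t))"
        unfolding s' using newphase_inv[OF D(2) px[symmetric] D(8) D(13)] .
      have "Lm \<le> ?T \<Longrightarrow> False"
      proof -
        assume L: "Lm \<le> ?T"
        have T: "?T = Suc i" using False2 mi(1) by simp
        obtain j where "j < ?T" "at R d (Suc t - j) = at R e (Suc t - j)"
          using meet_window[OF D(2) eC mde L, of "Suc t"] T mi(2) by auto
        then show False using win T by auto
      qed
      hence "phase_end t" unfolding phase_end_def using s' m by auto
      then show ?thesis using inv by simp
    qed
  qed
qed

lemma step_Ret:
  assumes I: "InvS t (sg t)" and m: "md (sg t) = Ret d p i"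
  shows "InvS (Suc t) (sg (Suc t)) \<and> ((TT (sg (Suc t)) = TT (sg t) \<and> Phi K (sg (Suc t)) < Phi K (sg t)) \<or> phase_end t)"
proof -
  let ?s = "sg t"
  let ?T = "TT ?s" and ?V = "VV ?s" and ?S = "SS ?s" and ?N = "NN ?s"
  note D = InvSD[OF I, unfolded m mcar.simps]
  have rd: "rd ?s = d" using D(1) .
  have px: "pos (Suc t) = at R d (Suc t)" using pos_Suc rd by simp
  have CS: "Cs (Suc t) = {c \<in> carriers R. at R c (Suc t) = at R d (Suc t)}" using Cs_Suc[OF rd] .
  have mi: "i < ?T" "i \<le> t" "?S \<noteq> []" "hd ?S = p" "?N d \<subseteq> ?V" "\<forall>j<i. at R p (t-j) \<noteq> at R d (t-j)"
    using D(14) by (simp_all add: minv_def m)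
  obtain S0 where S0: "?S = p # S0" using mi(3,4) by (cases ?S) auto
  have pC: "p \<in> carriers R" using D(5) D(7) S0 by auto
  have mdp: "meet R d p" using D(10) S0 by simp
  have fu': "\<And>m'. Lm \<le> ?T \<longrightarrow> (\<forall>v\<in>?V. (\<exists>i. m' = Scan v i) \<or> fullN ?N (Suc t) v)"
    by (rule full_all_mono[OF D(12)]) (simp add: m)
  show ?thesis
  proof (cases "p \<in> Cs (Suc t)")
    case True
    have s': "sg (Suc t) = ?s\<lparr>md := Dec p, rd := p, SS := S0\<rparr>"
      using True S0 by (simp add: sg_Suc stepf_def m)
    have f': "rd (sg (Suc t)) = p" "mcar (md (sg (Suc t))) = p" "TT (sg (Suc t)) = ?T"
     "VV (sg (Suc t)) = ?V" "SS (sg (Suc t)) = S0" "NN (sg (Suc t)) = ?N"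
     "md (sg (Suc t)) = Dec p"
      by (simp_all add: s')
    have pp: "at R p (Suc t) = pos (Suc t)" using True px CS by simp
    have ch: "chain R (p # S0)" using D(10) S0 by simp
    have cl: "\<forall>v\<in>?V - set (p # S0). ?N v \<subseteq> ?V" using D(11) S0 mi(5) by auto
    have cn: "(meetC R)\<^sup>*\<^sup>* cs p" using D(13) D(2) pC mdp
      by (meson meetC_def rtranclp.rtrancl_into_rtrancl)
    have pV: "p \<in> ?V" "set S0 \<subseteq> ?V" using D(7) S0 by auto
    have mi': "minv (Suc t) ?T ?V S0 ?N (md (sg (Suc t)))"
      unfolding f' minv_def by simp
    have fu2: "Lm \<le> ?T \<longrightarrow> (\<forall>v\<in>?V. (\<exists>i. Dec p = Scan v i) \<or> fullN ?N (Suc t) v)"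
      using fu'[of "Dec p"] .
    have inv: "InvS (Suc t) (sg (Suc t))"
      apply (rule InvSI[where d=p])
      unfolding f'
                    apply (rule refl)
                   apply simp
                  apply (rule pC)
                 apply (rule pp)
      using D(4) apply (simp only:)
      using D(5) apply (simp only:)
      using pV apply (simp only:)
      using pV apply (simp only:)
      using D(8) apply (simp only:)
      using D(9) apply (simp only:)
      using ch apply (simp only:)
      using cl apply (simp only:)
      using fu2 apply (simp only: f')
      using cn apply (simp only:)
      using mi' by (simp only: f')
    define a where "a = int (card ?V)"
    define l where "l = int (length S0)"
    define TI where "TI = int ?T"
    have "Phi K (sg (Suc t)) = (3*TI+2)*(int K - a) + (TI+1)*l + 2"
      unfolding Phi_def f' a_def l_def TI_def mpot_def by simp
    also have "\<dots> < (3*TI+2)*(int K - a) + (TI+1)*(l+1) + 1 - int i" using mi(1) TI_def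
      by (simp add: algebra_simps)
    also have "\<dots> = Phi K ?s" unfolding Phi_def a_def l_def TI_def mpot_def m S0 by simp
    finally show ?thesis using inv f' by simp
  next
    case False
    hence ne: "at R p (Suc t) \<noteq> at R d (Suc t)" using CS pC by auto
    have win: "\<forall>j<Suc i. at R p (Suc t - j) \<noteq> at R d (Suc t - j)"
      by (rule shiftw[of i "\<lambda>u. at R p u \<noteq> at R d u", OF mi(6) ne])
    show ?thesis
    proof (cases "Suc i < ?T")
      case True
      have s': "sg (Suc t) = ?s\<lparr>md := Ret d p (Suc i), rd := d\<rparr>"
        using True False by (simp add: sg_Suc stepf_def m)
      have f': "rd (sg (Suc t)) = d" "mcar (md (sg (Suc t))) = d" "TT (sg (Suc t)) = ?T"
       "VV (sg (Suc t)) = ?V" "SS (sg (Suc t)) = ?S" "NN (sg (Suc t)) = ?N"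
       "md (sg (Suc t)) = Ret d p (Suc i)"
        by (simp_all add: s')
      have mi': "minv (Suc t) ?T ?V ?S ?N (md (sg (Suc t)))"
        using mi True win unfolding f' minv_def by simp
      have inv: "InvS (Suc t) (sg (Suc t))"
        apply (rule InvSI)
        using D fu' mi' px f' by (simp_all only:)
      have "Phi K (sg (Suc t)) < Phi K ?s" unfolding Phi_def f' by (simp add: m mpot_def)
      then show ?thesis using inv f' by simp
    next
      case False2: False
      have s': "sg (Suc t) = newphase (2 * ?T) d"
        using False False2 by (simp add: sg_Suc stepf_def m)
      have inv: "InvS (Suc t) (sg (Suc t))"
        unfolding s' using newphase_inv[OF D(2) px[symmetric] D(8) D(13)] .
      have "Lm \<le> ?T \<Longrightarrow> False"
      proof -
        assume L: "Lm \<le> ?T"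
        have T: "?T = Suc i" using False2 mi(1) by simp
        obtain j where "j < ?T" "at R d (Suc t - j) = at R p (Suc t - j)"
          using meet_window[OF D(2) pC mdp L, of "Suc t"] T mi(2) by auto
        then show False using win T by auto
      qed
      hence "phase_end t" unfolding phase_end_def using s' m by auto
      then show ?thesis using inv by simp
    qed
  qed
qed

end


lemma pow2_bracket:
  assumes "1 \<le> (L::nat)"
  shows "\<exists>J. L \<le> 2^J \<and> 2^J \<le> 2*L"
proof -
  have ex: "\<exists>J. L \<le> 2^J" using less_exp[of L] by (intro exI[of _ L]) simp
  define J where "J = (LEAST J. L \<le> 2^J)"
  have J1: "L \<le> 2^J" unfolding J_def using LeastI_ex[OF ex] .
  have "2^J \<le> 2*L"
  proof (cases J)
    case 0 then show ?thesis using assms by simp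
  next
    case (Suc J')
    have "\<not> L \<le> 2^J'" using not_less_Least[of J' "\<lambda>J. L \<le> 2^J"] Suc unfolding J_def by simp
    then show ?thesis using Suc by simp
  qed
  then show ?thesis using J1 by blast
qed

context exrun
begin

lemma step:
  assumes I: "Inv t"
  shows "Inv (Suc t) \<and> ((TT (sg (Suc t)) = TT (sg t) \<and> Phi K (sg (Suc t)) < Phi K (sg t)) \<or> phase_end t)"
proof -
  have I': "InvS t (sg t)" using I by (simp add: Inv_def)
  show ?thesis
  proof (cases "md (sg t)")
    case Init
    then show ?thesis using InvSD(14)[OF I'] by (simp add: minv_def)
  next
    case (Scan d i)
    then show ?thesis using step_Scan[OF I'] by (simp add: Inv_def)
  next
    case (Dec d)
    then show ?thesis using step_Dec[OF I'] by (simp add: Inv_def)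
  next
    case (Seek d e i)
    then show ?thesis using step_Seek[OF I'] by (simp add: Inv_def)
  next
    case (Ret d p i)
    then show ?thesis using step_Ret[OF I'] by (simp add: Inv_def)
  qed
qed

lemma Inv_all: "Inv t"
proof (induction t)
  case 0 show ?case by (rule Inv0)
next
  case (Suc t) then show ?case using step by blast
qed

lemma K_pos: "1 \<le> K"
proof -
  have "carriers R \<noteq> {}" using wf by (simp add: pv_wf_def)
  then show ?thesis using finC by (simp add: K_def Suc_le_eq card_gt_0_iff)
qed

lemma Phi_pos:
  assumes I: "InvS t s"
  shows "1 \<le> Phi K s"
proof -
  note D = InvSD[OF I]
  have cV: "card (VV s) \<le> K" using D(5) finC unfolding K_def by (rule card_mono[rotated])
  have T1: "1 \<le> TT s" using D(8) by auto
  define a where "a = int (card (VV s))"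
  define l where "l = int (length (SS s))"
  define TI where "TI = int (TT s)"
  have KA: "0 \<le> int K - a" using cV a_def by simp
  have P: "Phi K s = (3*TI+2)*(int K - a) + (TI+1)*l + mpot (TT s) (md s)"
    unfolding Phi_def a_def l_def TI_def by simp
  have nn1: "0 \<le> (3*TI+2)*(int K - a)" using KA TI_def by simp
  have nn2: "0 \<le> (TI+1)*l" using TI_def l_def by simp
  show ?thesis
  proof (cases "md s")
    case Init then show ?thesis using D(14) by (simp add: minv_def)
  next
    case (Scan d i)
    then have "i < TT s" using D(14) by (simp add: minv_def)
    then show ?thesis using P nn1 nn2 Scan by (simp add: mpot_def)
  next
    case (Dec d)
    then show ?thesis using P nn1 nn2 by (simp add: mpot_def)
  next
    case (Seek d e i)
    then have mi: "i < TT s" "e \<in> NN s d" "e \<notin> VV s" using D(14) by (simp_all add: minv_def)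
    have "e \<in> carriers R" using D(9) mi(2) by blast
    hence "VV s \<subset> carriers R" using mi(3) D(5) by blast
    hence "card (VV s) < K" unfolding K_def using finC by (rule psubset_card_mono[rotated])
    hence "1 \<le> int K - a" using a_def by simp
    hence X: "(3*TI+2)*1 \<le> (3*TI+2)*(int K - a)" using TI_def
      by (intro mult_left_mono) simp_all
    have "mpot (TT s) (md s) = 1 - int i" using Seek by (simp add: mpot_def)
    moreover have "int i < TI" using mi(1) TI_def by simp
    moreover have "3*TI+2 \<le> (3*TI+2)*(int K - a)" using X by simp
    ultimately show ?thesis using P nn2 by linarith
  next
    case (Ret d p i)
    then have mi: "i < TT s" "SS s \<noteq> []" using D(14) by (simp_all add: minv_def)
    hence "1 \<le> l" using l_def by (cases "SS s") auto
    hence X: "(TI+1)*1 \<le> (TI+1)*l" using TI_def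
      by (intro mult_left_mono) simp_all
    have "mpot (TT s) (md s) = 1 - int i" using Ret by (simp add: mpot_def)
    moreover have "int i < TI" using mi(1) TI_def by simp
    moreover have "TI+1 \<le> (TI+1)*l" using X by simp
    ultimately show ?thesis using P nn1 by linarith
  qed
qed

lemma Phi_newphase:
  assumes "1 \<le> T"
  shows "Phi K (newphase T d) \<le> 5 * int K * int T"
proof -
  have "Phi K (newphase T d) = (3*int T+2)*(int K - 1) + int T + 2"
    by (simp add: Phi_def newphase_def mpot_def)
  also have "\<dots> = (3*int T+2)*int K - 2*int T" by (simp add: algebra_simps)
  also have "\<dots> \<le> 5 * int K * int T"
  proof -
    have "int K * 1 \<le> int K * int T" using assms by (intro mult_left_mono) simp_all
    then show ?thesis by (simp add: algebra_simps)
  qed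
  finally show ?thesis .
qed

lemma Lm1: "1 \<le> Lm"
proof -
  have "cs \<in> carriers R" using cs_in by (simp add: Cs_def)
  then show ?thesis using per unfolding perH_def by fastforce
qed

lemma pow_double: "T = (2::nat)^a \<Longrightarrow> T < 2^J \<Longrightarrow> 2*T \<le> 2^J"
proof -
  assume "T = 2^a" "T < 2^J"
  hence "a < J" using power_strict_increasing_iff[of "2::nat" a J] by simp
  hence "(2::nat)^(Suc a) \<le> 2^J" by (intro power_increasing) simp_all
  then show ?thesis using \<open>T = 2^a\<close> by simp
qed

lemma seen_bound: "\<exists>t \<le> 20 * K * Lm. sites R \<subseteq> pos ` {..t}"
proof -
  obtain J where J: "Lm \<le> 2^J" "2^J \<le> 2*Lm" using pow2_bracket[OF Lm1] by blast
  define TS where "TS = (2::nat)^J"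
  define Psi where "Psi t = Phi K (sg t) + 10 * int K * (int TS - int (TT (sg t)))" for t
  have TT0: "TT (sg 0) = 1" by (simp add: sg0 newphase_def)
  have TS1: "1 \<le> TS" unfolding TS_def by simp
  have claim: "sites R \<subseteq> pos ` {..t} \<or> (TT (sg t) \<le> TS \<and> Psi t + int t \<le> Psi 0)" for t
  proof (induction t)
    case 0 then show ?case using TT0 TS1 by simp
  next
    case (Suc t)
    show ?case
    proof (cases "sites R \<subseteq> pos ` {..t}")
      case True
      then show ?thesis by (meson atMost_iff image_mono le_SucI subset_iff)
    next
      case False
      hence IH: "TT (sg t) \<le> TS" "Psi t + int t \<le> Psi 0" using Suc.IH by auto
      have st: "(TT (sg (Suc t)) = TT (sg t) \<and> Phi K (sg (Suc t)) < Phi K (sg t)) \<or> phase_end t"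
        using step[OF Inv_all[of t]] by blast
      have IS: "InvS t (sg t)" using Inv_all[of t] by (simp add: Inv_def)
      have Ph1: "1 \<le> Phi K (sg t)" by (rule Phi_pos[OF IS])
      show ?thesis
      proof (cases "TT (sg (Suc t)) = TT (sg t) \<and> Phi K (sg (Suc t)) < Phi K (sg t)")
        case True
        hence "Psi (Suc t) < Psi t" unfolding Psi_def by simp
        then show ?thesis using IH True by simp
      next
        case False2: False
        hence pe: "phase_end t" using st by blast
        show ?thesis
        proof (cases "TT (sg t) = TS")
          case True
          hence "sites R \<subseteq> pos ` {..t}" using pe J(1) unfolding phase_end_def TS_def by simp
          then show ?thesis using False by blast
        next
          case False3: False
          let ?T = "TT (sg t)"
          obtain a where a: "?T = 2^a" using InvSD(8)[OF IS] by blast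
          have dT: "2 * ?T \<le> TS" using pow_double[OF a] False3 IH(1) unfolding TS_def by simp
          have s': "sg (Suc t) = newphase (2 * ?T) (mcar (md (sg t)))" using pe by (simp add: phase_end_def)
          have T1: "1 \<le> ?T" using a by simp
          have "Phi K (sg (Suc t)) \<le> 5 * int K * int (2 * ?T)"
            unfolding s' by (rule Phi_newphase) (use T1 in simp)
          moreover have "TT (sg (Suc t)) = 2 * ?T" by (simp add: s' newphase_def)
          ultimately have "Psi (Suc t) \<le> 10 * int K * int ?T + 10 * int K * (int TS - int (2 * ?T))"
            unfolding Psi_def by simp
          also have "\<dots> = 10 * int K * (int TS - int ?T)" by (simp add: algebra_simps)
          also have "\<dots> < Psi t" unfolding Psi_def using Ph1 by simp
          finally have "Psi (Suc t) < Psi t" .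
          then show ?thesis using IH dT \<open>TT (sg (Suc t)) = 2 * ?T\<close> by simp
        qed
      qed
    qed
  qed
  have Psi0: "Psi 0 \<le> 20 * int K * int Lm"
  proof -
    have "Phi K (sg 0) \<le> 5 * int K * int 1" unfolding sg0 by (rule Phi_newphase) simp
    hence "Psi 0 \<le> 5 * int K + 10 * int K * (int TS - 1)" unfolding Psi_def using TT0 by simp
    also have "\<dots> \<le> 10 * int K * int TS" by (simp add: algebra_simps)
    also have "\<dots> \<le> 10 * int K * (2 * int Lm)" using J(2) unfolding TS_def
      by (intro mult_left_mono) (simp_all add: of_nat_mono[of "2^J" "2*Lm", simplified])
    finally show ?thesis by simp
  qed
  define t0 where "t0 = nat (Psi 0)"
  have "sites R \<subseteq> pos ` {..t0}"
  proof (rule ccontr)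
    assume "\<not> sites R \<subseteq> pos ` {..t0}"
    hence c: "TT (sg t0) \<le> TS" "Psi t0 + int t0 \<le> Psi 0" using claim[of t0] by auto
    have IS: "InvS t0 (sg t0)" using Inv_all[of t0] by (simp add: Inv_def)
    have "1 \<le> Phi K (sg t0)" by (rule Phi_pos[OF IS])
    moreover have "0 \<le> 10 * int K * (int TS - int (TT (sg t0)))" using c(1) by simp
    ultimately have "1 \<le> Psi t0" unfolding Psi_def by linarith
    hence "int t0 < Psi 0" using c(2) by linarith
    then show False unfolding t0_def by linarith
  qed
  moreover have "t0 \<le> 20 * K * Lm" unfolding t0_def using Psi0 by (simp add: nat_le_iff)
  ultimately show ?thesis by blast
qed

end


lemma fst_set_hist:
  "fst ` set (map (\<lambda>u. observe R (fpos R x0 u) u) [0..<Suc t]) = fpos R x0 ` {..t}"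
proof -
  have "set [0..<Suc t] = {..t}" by auto
  then have "fst ` set (map (\<lambda>u. observe R (fpos R x0 u) u) [0..<Suc t])
      = (\<lambda>u. fst (observe R (fpos R x0 u) u)) ` {..t}"
    by (simp only: list.set_map image_image)
  then show ?thesis by (simp add: observe_def)
qed

lemma explores:
  assumes wf: "pv_wf R" and feas: "feasible R" and per: "perH R Lm" and n: "card (sites R) = n"
    and B: "20 * card (carriers R) * Lm \<le> B"
  shows "explores_within R (alg n) B"
  unfolding explores_within_def
proof
  fix x0 assume x0: "x0 \<in> start R"
  interpret E: exrun R x0 Lm using wf x0 feas per by unfold_locales
  obtain t0 where t0: "t0 \<le> 20 * E.K * Lm" "sites R \<subseteq> E.pos ` {..t0}"
    using E.seen_bound by blast
  define P where "P t \<longleftrightarrow> sites R \<subseteq> E.pos ` {..t}" for t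
  define m where "m = (LEAST t. P t)"
  have Pm: "P m" unfolding m_def using t0(2) P_def by (metis LeastI)
  have mt0: "m \<le> t0" unfolding m_def using t0(2) P_def by (metis Least_le)
  have nP: "s < m \<Longrightarrow> \<not> P s" for s unfolding m_def by (rule not_less_Least)
  have finS: "finite (sites R)" using wf by (simp add: pv_wf_def)
  have pos_in: "E.pos t \<in> sites R" for t
  proof -
    have IS: "E.InvS t (E.sg t)" using E.Inv_all[of t] by (simp add: E.Inv_def)
    have "mcar (md (E.sg t)) \<in> carriers R" "at R (mcar (md (E.sg t))) t = E.pos t"
      using E.InvSD[OF IS] by simp_all
    then show ?thesis using at_in_route[OF _ wf, of "mcar (md (E.sg t))" t] wf
      unfolding pv_wf_def by force
  qed
  have sub: "E.pos ` {..t} \<subseteq> sites R" for t using pos_in by blast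
  have cardlt: "s < m \<Longrightarrow> card (fpos R x0 ` {..s}) < n" for s
  proof -
    assume "s < m"
    hence "E.pos ` {..s} \<subset> sites R" using nP[of s] sub[of s] unfolding P_def by blast
    hence "card (E.pos ` {..s}) < card (sites R)" using finS by (rule psubset_card_mono[rotated])
    then show ?thesis using n by (simp add: E.pos_def)
  qed
  have H: "t \<le> m \<Longrightarrow> hist R (alg n) x0 t = map (\<lambda>u. observe R (fpos R x0 u) u) [0..<Suc t]" for t
    by (rule hist_frun) (use cardlt in auto)
  have AP: "t \<le> m \<Longrightarrow> agent_pos R (alg n) x0 t = E.pos t" for t
  proof -
    assume "t \<le> m"
    have "last (map (\<lambda>u. observe R (fpos R x0 u) u) [0..<Suc t]) = observe R (fpos R x0 t) t"
      by (simp add: last_map del: upt_Suc)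
    then show ?thesis using H[OF \<open>t \<le> m\<close>] by (simp add: agent_pos_def observe_def E.pos_def)
  qed
  have moves: "\<forall>t<m. \<exists>c\<in>carriers R. alg n (hist R (alg n) x0 t) = Ride c \<and> at R c t = agent_pos R (alg n) x0 t"
  proof (intro allI impI)
    fix t assume tm: "t < m"
    have IS: "E.InvS t (E.sg t)" using E.Inv_all[of t] by (simp add: E.Inv_def)
    have rdC: "rd (E.sg t) \<in> carriers R" "at R (rd (E.sg t)) t = E.pos t"
      using E.InvSD[OF IS] by simp_all
    have "card (fst ` set (hist R (alg n) x0 t)) < n"
      using H[of t] tm cardlt[OF tm] fst_set_hist[of R x0 t] by simp
    hence "alg n (hist R (alg n) x0 t) = Ride (rd (E.sg t))"
      using H[of t] tm foldl_frun[of R x0 t] by (simp add: alg_def E.sg_def)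
    then show "\<exists>c\<in>carriers R. alg n (hist R (alg n) x0 t) = Ride c \<and> at R c t = agent_pos R (alg n) x0 t"
      using rdC AP[of t] tm by auto
  qed
  have halt: "alg n (hist R (alg n) x0 m) = Halt"
  proof -
    have "E.pos ` {..m} = sites R" using Pm sub[of m] unfolding P_def by blast
    hence "card (fst ` set (hist R (alg n) x0 m)) = n"
      using H[of m] fst_set_hist[of R x0 m] n by (simp add: E.pos_def)
    then show ?thesis by (simp add: alg_def)
  qed
  have cover: "sites R \<subseteq> agent_pos R (alg n) x0 ` {..m}"
    using Pm AP unfolding P_def by auto
  have "m \<le> B" using mt0 t0(1) B by (simp add: E.K_def)
  then show "\<exists>m\<le>B. (\<forall>t<m. \<exists>c\<in>carriers R. alg n (hist R (alg n) x0 t) = Ride c \<and> at R c t = agent_pos R (alg n) x0 t)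
       \<and> alg n (hist R (alg n) x0 m) = Halt \<and> sites R \<subseteq> agent_pos R (alg n) x0 ` {..m}"
    using moves halt cover by blast
qed

lemma len_le_period: "pv_wf R \<Longrightarrow> c \<in> carriers R \<Longrightarrow> length (route R c) \<le> period R"
  unfolding period_def pv_wf_def by (auto intro: Max_ge)

lemma len_pos: "pv_wf R \<Longrightarrow> c \<in> carriers R \<Longrightarrow> 0 < length (route R c)"
  unfolding pv_wf_def by auto

lemma at_period: "at R c (t + length (route R c) * q) = at R c t"
  unfolding at_def by simp

lemma perH_general: assumes "pv_wf R" shows "perH R (period R ^ 2)"
  unfolding perH_def
proof (intro ballI)
  fix c d assume c: "c \<in> carriers R" and d: "d \<in> carriers R"
  let ?L = "length (route R c) * length (route R d)"
  have "0 < ?L" using len_pos[OF assms c] len_pos[OF assms d] by simp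
  moreover have "?L \<le> period R ^ 2"
    using len_le_period[OF assms c] len_le_period[OF assms d] by (simp add: power2_eq_square mult_le_mono)
  moreover have "\<forall>t. at R c (t + ?L) = at R c t \<and> at R d (t + ?L) = at R d t"
    using at_period[of R c _ "length (route R d)"] at_period[of R d _ "length (route R c)"]
    by (simp add: mult.commute)
  ultimately show "\<exists>L>0. L \<le> period R ^ 2 \<and> (\<forall>t. at R c (t + L) = at R c t \<and> at R d (t + L) = at R d t)"
    by blast
qed

lemma perH_homog: assumes "pv_wf R" "homogeneous R" shows "perH R (period R)"
  unfolding perH_def
proof (intro ballI)
  fix c d assume c: "c \<in> carriers R" and d: "d \<in> carriers R"
  let ?L = "length (route R c)"
  have eq: "length (route R d) = ?L" using assms(2) c d unfolding homogeneous_def by metis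
  have "0 < ?L" using len_pos[OF assms(1) c] by simp
  moreover have "?L \<le> period R" using len_le_period[OF assms(1) c] .
  moreover have "\<forall>t. at R c (t + ?L) = at R c t \<and> at R d (t + ?L) = at R d t"
    using at_period[of R c _ 1] at_period[of R d _ 1] eq by simp
  ultimately show "\<exists>L>0. L \<le> period R \<and> (\<forall>t. at R c (t + L) = at R c t \<and> at R d (t + L) = at R d t)"
    by blast
qed

theorem mainTheorem10:
  shows "(\<exists>C0::nat. \<forall>n\<ge>1. \<exists>A::algorithm. \<forall>R.
            pv_wf R \<and> card (sites R) = n \<and> feasible R \<longrightarrow>
            explores_within R A (C0 * card (carriers R) * period R ^ 2))
       \<and> (\<exists>C0::nat. \<forall>n\<ge>1. \<exists>A::algorithm. \<forall>R.
            pv_wf R \<and> card (sites R) = n \<and> homogeneous R \<and> feasible R \<longrightarrow>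
            explores_within R A (C0 * card (carriers R) * period R))"
proof (intro conjI exI[of _ 20] allI impI)
  fix n :: nat
  show "\<exists>A. \<forall>R. pv_wf R \<and> card (sites R) = n \<and> feasible R \<longrightarrow>
            explores_within R A (20 * card (carriers R) * period R ^ 2)"
    by (intro exI[of _ "alg n"] allI impI, elim conjE) (rule explores, auto intro: perH_general)
next
  fix n :: nat
  show "\<exists>A. \<forall>R. pv_wf R \<and> card (sites R) = n \<and> homogeneous R \<and> feasible R \<longrightarrow>
            explores_within R A (20 * card (carriers R) * period R)"
    by (intro exI[of _ "alg n"] allI impI, elim conjE) (rule explores, auto intro: perH_homog)
qed



end
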